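(* Let $\mathcal{X}$ be a set of nonempty causally complete open subsets of $\mathbb{R}^{1+s}$ satisfying the following two properties: ($\mathbf{c2}_1$) for any $X\in\mathcal{X}$ and $X_0\in\mathcal{X}$ with $X_0\subset X$, there exists $X_{00}\in\mathcal{X}$ with $X_{00}\subset X_0$ such that $\mathcal{X}(X\cap X_{00}')$ is nonempty and connected; ($\mathbf{c2}_2$) for any $X\in\mathcal{X}$ and $X_1,X_2\in\mathcal{X}$ with $X_1,X_2\subset X$, there exist $X_{10},X_{20}\in\mathcal{X}$ with $X_{10}\subset X_1$, $X_{20}\subset X_2$ such that $\mathcal{X}(X\cap X_{10}'\cap X_{20}')$ is nonempty. Then for every $X\in\mathcal{X}$ the set $\mathcal{X}^{(2)}_\times(X)$ is nonempty and connected.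
   Context: $R'$ denotes the causal complement of $R\subset\mathbb{R}^{1+s}$; $X_1\perp X_2$ (causal disjointness) means $(x_1-x_2)^2<0$ for all $x_1\in X_1,x_2\in X_2$ (Minkowski metric with signature $(+,-,\dots,-)$). For $R\subset\mathbb{R}^{1+s}$: $\mathcal{X}(R)=\{X\in\mathcal{X}: X\subset R\}$, half-ordered by inclusion, and $\mathcal{X}^{(2)}_\times(R)=\{(X_1,X_2)\in\mathcal{X}(R)\times\mathcal{X}(R): X_1\perp X_2\}$, half-ordered by componentwise inclusion. A path of length $N$ in a half-ordered set $(A,\subset)$ is a sequence $a_0,\dots,a_N\in A$ with $a_{j-1}\subset a_j$ or $a_j\subset a_{j-1}$ for each $j$; $A$ is connected if any two of its elements are joined by a path of finite length. *)

theory Defs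
  imports "HOL-Analysis.Analysis"
begin

text \<open>Minkowski space R^{1+s}: points are pairs (t, x) with time t and spatial part
  x :: real^'s (s = CARD('s)). Metric signature (+,-,...,-).\<close>

type_synonym 's mpoint = "real \<times> (real ^ 's)"

definition mink_sq :: "'s::finite mpoint \<Rightarrow> real" where
  "mink_sq p = (fst p)\<^sup>2 - (norm (snd p))\<^sup>2"

definition causally_disjoint :: "'s::finite mpoint set \<Rightarrow> 's mpoint set \<Rightarrow> bool" where
  "causally_disjoint X1 X2 \<longleftrightarrow> (\<forall>x1\<in>X1. \<forall>x2\<in>X2. mink_sq (x1 - x2) < 0)"

definition causal_compl :: "'s::finite mpoint set \<Rightarrow> 's mpoint set" where
  "causal_compl R = {y. \<forall>x\<in>R. mink_sq (x - y) < 0}"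

definition causally_complete :: "'s::finite mpoint set \<Rightarrow> bool" where
  "causally_complete R \<longleftrightarrow> causal_compl (causal_compl R) = R"

definition Xsub :: "'s::finite mpoint set set \<Rightarrow> 's mpoint set \<Rightarrow> 's mpoint set set" where
  "Xsub XX R = {X \<in> XX. X \<subseteq> R}"

definition Xpairs :: "'s::finite mpoint set set \<Rightarrow> 's mpoint set
    \<Rightarrow> ('s mpoint set \<times> 's mpoint set) set" where
  "Xpairs XX R = {(X1, X2). X1 \<in> Xsub XX R \<and> X2 \<in> Xsub XX R \<and> causally_disjoint X1 X2}"

definition hos_connected :: "'b set \<Rightarrow> ('b \<Rightarrow> 'b \<Rightarrow> bool) \<Rightarrow> bool" where
  "hos_connected A le \<longleftrightarrow>
     (\<forall>a\<in>A. \<forall>b\<in>A. \<exists>(N::nat) p. p 0 = a \<and> p N = b \<and> (\<forall>j\<le>N. p j \<in> A) \<and>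
        (\<forall>j\<in>{1..N}. le (p (j - 1)) (p j) \<or> le (p j) (p (j - 1))))"

definition pair_le :: "('a set \<times> 'a set) \<Rightarrow> ('a set \<times> 'a set) \<Rightarrow> bool" where
  "pair_le P Q \<longleftrightarrow> fst P \<subseteq> fst Q \<and> snd P \<subseteq> snd Q"

end

theory Submission
  imports Defs
begin

definition stepR :: "'b set \<Rightarrow> ('b \<Rightarrow> 'b \<Rightarrow> bool) \<Rightarrow> 'b \<Rightarrow> 'b \<Rightarrow> bool" where
  "stepR A le P Q \<longleftrightarrow> P \<in> A \<and> Q \<in> A \<and> (le P Q \<or> le Q P)"

lemma path_to_rt:
  fixes N :: nat
  assumes "\<forall>j\<le>N. p j \<in> A" "\<forall>j\<in>{1..N}. le (p (j-1)) (p j) \<or> le (p j) (p (j-1))"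
  shows "(stepR A le)\<^sup>*\<^sup>* (p 0) (p N)"
  using assms
proof (induction N)
  case 0 then show ?case by simp
next
  case (Suc N)
  have "(stepR A le)\<^sup>*\<^sup>* (p 0) (p N)" using Suc by auto
  moreover have "stepR A le (p N) (p (Suc N))"
    using Suc.prems unfolding stepR_def
    by (metis Suc_eq_plus1 atLeastAtMost_iff diff_Suc_1 le_SucI le_add2 order_refl)
  ultimately show ?case by (rule rtranclp.rtrancl_into_rtrancl)
qed

lemma rt_to_path:
  assumes "(stepR A le)\<^sup>*\<^sup>* a b" "a \<in> A"
  shows "\<exists>(N::nat) p. p 0 = a \<and> p N = b \<and> (\<forall>j\<le>N. p j \<in> A) \<and>
        (\<forall>j\<in>{1..N}. le (p (j - 1)) (p j) \<or> le (p j) (p (j - 1)))"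
  using assms
proof (induction rule: rtranclp_induct)
  case base
  show ?case by (rule exI[of _ 0], rule exI[of _ "\<lambda>_. a"]) (simp add: assms)
next
  case (step b c)
  then obtain N :: nat and p :: "nat \<Rightarrow> _" where p: "p 0 = a" "p N = b" "\<forall>j\<le>N. p j \<in> A"
    "\<forall>j\<in>{1..N}. le (p (j - 1)) (p j) \<or> le (p j) (p (j - 1))"
    using step.IH step.prems by metis
  define q where "q = p(Suc N := c)"
  have "q 0 = a" using p by (simp add: q_def)
  moreover have "q (Suc N) = c" by (simp add: q_def)
  moreover have "\<forall>j\<le>Suc N. q j \<in> A"
    using p step.hyps(2) unfolding q_def stepR_def by (auto simp: le_Suc_eq)
  moreover have "\<forall>j\<in>{1..Suc N}. le (q (j - 1)) (q j) \<or> le (q j) (q (j - 1))"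
  proof
    fix j assume j: "j \<in> {1..Suc N}"
    show "le (q (j - 1)) (q j) \<or> le (q j) (q (j - 1))"
    proof (cases "j = Suc N")
      case True then show ?thesis using p step.hyps(2) unfolding q_def stepR_def by auto
    next
      case False then show ?thesis using p j unfolding q_def by auto
    qed
  qed
  ultimately show ?case by blast
qed

lemma hos_connected_iff:
  "hos_connected A le \<longleftrightarrow> (\<forall>a\<in>A. \<forall>b\<in>A. (stepR A le)\<^sup>*\<^sup>* a b)"
  unfolding hos_connected_def
  using rt_to_path path_to_rt by metis

lemma rt_map:
  assumes "(stepR A le)\<^sup>*\<^sup>* a b"
    and "\<And>x. x \<in> A \<Longrightarrow> f x \<in> B"
    and "\<And>x y. x \<in> A \<Longrightarrow> y \<in> A \<Longrightarrow> le x y \<Longrightarrow> le' (f x) (f y)"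
  shows "(stepR B le')\<^sup>*\<^sup>* (f a) (f b)"
  using assms(1)
proof (induction rule: rtranclp_induct)
  case base then show ?case by simp
next
  case (step b c)
  have "stepR B le' (f b) (f c)" using step.hyps(2) assms(2,3) unfolding stepR_def by blast
  with step.IH show ?case by simp
qed

lemma rt_sym:
  assumes "(stepR A le)\<^sup>*\<^sup>* a b" shows "(stepR A le)\<^sup>*\<^sup>* b a"
  using assms
proof (induction rule: rtranclp_induct)
  case base then show ?case by simp
next
  case (step b c)
  have "stepR A le c b" using step.hyps(2) unfolding stepR_def by blast
  then show ?case using step.IH by (rule converse_rtranclp_into_rtranclp)
qed

lemma mink_sq_swap: "mink_sq (x - y) = mink_sq (y - x)"
  unfolding mink_sq_def
  by (metis (no_types, lifting) fst_diff minus_diff_eq norm_minus_commute power2_minus snd_diff)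

lemma cd_sym: "causally_disjoint A B \<Longrightarrow> causally_disjoint B A"
  unfolding causally_disjoint_def using mink_sq_swap by metis

lemma sub_cc_iff: "Z \<subseteq> causal_compl A \<longleftrightarrow> causally_disjoint A Z"
  unfolding causally_disjoint_def causal_compl_def by auto

lemma cd_mono: "causally_disjoint A B \<Longrightarrow> A0 \<subseteq> A \<Longrightarrow> B0 \<subseteq> B \<Longrightarrow> causally_disjoint A0 B0"
  unfolding causally_disjoint_def by blast

theorem proposition3p3:
  fixes XX :: "'s::finite mpoint set set"
  assumes members: "\<And>X. X \<in> XX \<Longrightarrow> X \<noteq> {} \<and> open X \<and> causally_complete X"
    and c2_1: "\<And>X X0. X \<in> XX \<Longrightarrow> X0 \<in> XX \<Longrightarrow> X0 \<subseteq> X \<Longrightarrow>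
       \<exists>X00\<in>XX. X00 \<subseteq> X0 \<and> Xsub XX (X \<inter> causal_compl X00) \<noteq> {} \<and>
                 hos_connected (Xsub XX (X \<inter> causal_compl X00)) (\<subseteq>)"
    and c2_2: "\<And>X X1 X2. X \<in> XX \<Longrightarrow> X1 \<in> XX \<Longrightarrow> X2 \<in> XX \<Longrightarrow> X1 \<subseteq> X \<Longrightarrow> X2 \<subseteq> X \<Longrightarrow>
       \<exists>X10\<in>XX. \<exists>X20\<in>XX. X10 \<subseteq> X1 \<and> X20 \<subseteq> X2 \<and>
                 Xsub XX (X \<inter> causal_compl X10 \<inter> causal_compl X20) \<noteq> {}"
  shows "\<forall>X\<in>XX. Xpairs XX X \<noteq> {} \<and> hos_connected (Xpairs XX X) pair_le"
proof
  fix X assume X: "X \<in> XX"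
  have memP: "(A, B) \<in> Xpairs XX X \<longleftrightarrow> A \<in> XX \<and> B \<in> XX \<and> A \<subseteq> X \<and> B \<subseteq> X \<and> causally_disjoint A B"
    for A B unfolding Xpairs_def Xsub_def by auto
  have nonempty: "Xpairs XX X \<noteq> {}"
  proof -
    obtain X00 where X00: "X00 \<in> XX" "X00 \<subseteq> X" "Xsub XX (X \<inter> causal_compl X00) \<noteq> {}"
      using c2_1[OF X X] by blast
    then obtain Y where "Y \<in> XX" "Y \<subseteq> X" "Y \<subseteq> causal_compl X00"
      unfolding Xsub_def by auto
    then have "(X00, Y) \<in> Xpairs XX X" using X00 memP sub_cc_iff by blast
    then show ?thesis by blast
  qed
  let ?T = "stepR (Xpairs XX X) pair_le"
  have L1: "?T\<^sup>*\<^sup>* (A, B) (A0, Z)"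
    if AB: "(A, B) \<in> Xpairs XX X" and A0: "A0 \<in> XX" "A0 \<subseteq> A"
      and Z: "Z \<in> XX" "Z \<subseteq> X" "causally_disjoint A0 Z" for A B A0 Z
  proof -
    have AB': "A \<in> XX" "B \<in> XX" "A \<subseteq> X" "B \<subseteq> X" "causally_disjoint A B" using AB memP by auto
    obtain A00 where A00: "A00 \<in> XX" "A00 \<subseteq> A0"
      and conn: "hos_connected (Xsub XX (X \<inter> causal_compl A00)) (\<subseteq>)"
      using c2_1[OF X A0(1)] A0(2) AB'(3) by blast
    let ?S = "Xsub XX (X \<inter> causal_compl A00)"
    have "causally_disjoint A00 B" using cd_mono[OF AB'(5)] A00 A0 by blast
    then have BS: "B \<in> ?S" using AB' sub_cc_iff unfolding Xsub_def by blast
    have "causally_disjoint A00 Z" using cd_mono[OF Z(3)] A00 by blast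
    then have ZS: "Z \<in> ?S" using Z sub_cc_iff unfolding Xsub_def by blast
    have "(stepR ?S (\<subseteq>))\<^sup>*\<^sup>* B Z" using conn BS ZS hos_connected_iff by metis
    have A00X: "A00 \<subseteq> X" using A00 A0 AB' by blast
    have mapS: "(A00, W) \<in> Xpairs XX X" if "W \<in> ?S" for W
      using that A00 A00X memP sub_cc_iff unfolding Xsub_def by (metis (no_types, lifting) le_inf_iff mem_Collect_eq)
    have mid: "?T\<^sup>*\<^sup>* (A00, B) (A00, Z)"
      using rt_map[where f="\<lambda>W. (A00, W)" and B="Xpairs XX X" and le'=pair_le,
          OF \<open>(stepR ?S (\<subseteq>))\<^sup>*\<^sup>* B Z\<close>] mapS by (simp add: pair_le_def)
    have s1: "?T (A, B) (A00, B)" using AB mapS[OF BS] A00 A0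
      unfolding stepR_def pair_le_def by auto
    have s2: "?T (A00, Z) (A0, Z)" using mapS[OF ZS] A00 A0 Z AB' memP
      unfolding stepR_def pair_le_def by auto
    show ?thesis using s1 mid s2
      by (meson converse_rtranclp_into_rtranclp rtranclp.rtrancl_into_rtrancl)
  qed
  have swapP: "prod.swap P \<in> Xpairs XX X" if "P \<in> Xpairs XX X" for P
    using that memP cd_sym by (cases P) auto
  have SW: "?T\<^sup>*\<^sup>* (prod.swap P) (prod.swap Q)" if "?T\<^sup>*\<^sup>* P Q" for P Q
    using rt_map[OF that, where f=prod.swap] swapP by (auto simp: pair_le_def)
  have L2: "?T\<^sup>*\<^sup>* (A, B) (Z, B0)"
    if AB: "(A, B) \<in> Xpairs XX X" and B0: "B0 \<in> XX" "B0 \<subseteq> B"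
      and Z: "Z \<in> XX" "Z \<subseteq> X" "causally_disjoint Z B0" for A B B0 Z
  proof -
    have "(B, A) \<in> Xpairs XX X" using swapP[OF AB] by simp
    then have "?T\<^sup>*\<^sup>* (B, A) (B0, Z)" using L1 B0 Z cd_sym by blast
    then show ?thesis using SW by fastforce
  qed
  have "?T\<^sup>*\<^sup>* P Q" if P: "P \<in> Xpairs XX X" and Q: "Q \<in> Xpairs XX X" for P Q
  proof -
    obtain X1 X2 where P': "P = (X1, X2)" by (cases P)
    obtain Y1 Y2 where Q': "Q = (Y1, Y2)" by (cases Q)
    have h: "X1 \<in> XX" "X1 \<subseteq> X" "Y1 \<in> XX" "Y1 \<subseteq> X" using P Q P' Q' memP by auto
    obtain X10 Y10 where XY: "X10 \<in> XX" "Y10 \<in> XX" "X10 \<subseteq> X1" "Y10 \<subseteq> Y1"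
      "Xsub XX (X \<inter> causal_compl X10 \<inter> causal_compl Y10) \<noteq> {}"
      using c2_2[OF X h(1) h(3) h(2) h(4)] by blast
    then obtain Z where Z: "Z \<in> XX" "Z \<subseteq> X" "causally_disjoint X10 Z" "causally_disjoint Y10 Z"
      unfolding Xsub_def using sub_cc_iff by (metis (no_types, lifting) empty_Collect_eq le_inf_iff)
    have 1: "?T\<^sup>*\<^sup>* (X1, X2) (X10, Z)" using L1 P P' XY Z by blast
    have 2: "?T\<^sup>*\<^sup>* (Y1, Y2) (Y10, Z)" using L1 Q Q' XY Z by blast
    have X10Z: "(X10, Z) \<in> Xpairs XX X" using memP XY Z h by blast
    have 3: "?T\<^sup>*\<^sup>* (X10, Z) (Y10, Z)"
      using L2[OF X10Z Z(1) order_refl XY(2)] XY h Z cd_sym by blast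
    show ?thesis using 1 3 rt_sym[OF 2] P' Q' by (meson rtranclp_trans)
  qed
  then show "Xpairs XX X \<noteq> {} \<and> hos_connected (Xpairs XX X) pair_le"
    using nonempty hos_connected_iff by blast
qed

end
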